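(* Let $m>2$ be odd and $n$ a positive integer. Then $O(m)$ divides $P(m,n)$.
   Context: For odd $m>2$, $O(m)$ is the multiplicative order of $2$ modulo $m$ (the least positive $k$ with $2^k\equiv1\pmod m$). For positive integers $m,n$, let $\mathbf{Z}_m$ be the integers modulo $m$ and $T:\mathbf{Z}_m^n\to\mathbf{Z}_m^n$, $T(a_0,\dots,a_{n-1})=(a_0+a_1,a_1+a_2,\dots,a_{n-1}+a_0)$. For $\mathbf{a}\in\mathbf{Z}_m^n$ the cycle length of $(T^k\mathbf{a})_{k\ge0}$ is the smallest positive integer $P$ such that there is $N$ with $T^{k+P}\mathbf{a}=T^k\mathbf{a}$ for all $k\ge N$. $P(m,n)$ denotes the maximum of these cycle lengths over all $\mathbf{a}\in\mathbf{Z}_m^n$. *)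

theory Defs
  imports "HOL-Number_Theory.Number_Theory"
begin

text \<open>Elements of Z_m^n are represented as functions nat => int whose values at
indices i < n lie in {0..<m} (canonical residues) and which vanish at i >= n.\<close>

definition ducci_vecs :: "nat \<Rightarrow> nat \<Rightarrow> (nat \<Rightarrow> int) set" where
  "ducci_vecs m n = {a. (\<forall>i<n. 0 \<le> a i \<and> a i < int m) \<and> (\<forall>i\<ge>n. a i = 0)}"

definition ducciT :: "nat \<Rightarrow> nat \<Rightarrow> (nat \<Rightarrow> int) \<Rightarrow> (nat \<Rightarrow> int)" where
  "ducciT m n a = (\<lambda>i. if i < n then (a i + a (Suc i mod n)) mod int m else 0)"

definition cycle_len :: "nat \<Rightarrow> nat \<Rightarrow> (nat \<Rightarrow> int) \<Rightarrow> nat" where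
  "cycle_len m n a = (LEAST P. 0 < P \<and>
     (\<exists>N. \<forall>k\<ge>N. (ducciT m n ^^ (k + P)) a = (ducciT m n ^^ k) a))"

definition Pmax :: "nat \<Rightarrow> nat \<Rightarrow> nat" where
  "Pmax m n = Max (cycle_len m n ` ducci_vecs m n)"

definition Ord2 :: "nat \<Rightarrow> nat" where
  "Ord2 m = ord m 2"

end

theory Submission
  imports Defs
begin

lemma vecs_T:
  assumes "a \<in> ducci_vecs m n" "m > 0"
  shows "ducciT m n a \<in> ducci_vecs m n"
  using assms by (auto simp: ducci_vecs_def ducciT_def)

lemma vecs_pow:
  assumes "a \<in> ducci_vecs m n" "m > 0"
  shows "(ducciT m n ^^ k) a \<in> ducci_vecs m n"
  using assms by (induction k) (auto intro: vecs_T)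

lemma finite_vecs: "finite (ducci_vecs m n)"
proof -
  have "ducci_vecs m n \<subseteq> {f. \<forall>x. (x \<in> {..<n} \<longrightarrow> f x \<in> {0..<int m}) \<and> (x \<notin> {..<n} \<longrightarrow> f x = 0)}"
    by (auto simp: ducci_vecs_def)
  moreover have "finite {f. \<forall>x. (x \<in> {..<n} \<longrightarrow> f x \<in> {0..<int m}) \<and> (x \<notin> {..<n} \<longrightarrow> f x = (0::int))}"
    by (rule finite_set_of_finite_funs) auto
  ultimately show ?thesis by (rule finite_subset)
qed

lemma idx0:
  fixes i j n :: nat
  assumes "i < n" "j < n"
  shows "((i + n - j) mod n = 0) = (j = i)"
proof (cases "j < i")
  case True
  have e: "i + n - j = (i - j) + n" using True by linarith
  have "(i + n - j) mod n = (i - j) mod n" unfolding e by (rule mod_add_self2)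
  also have "\<dots> = i - j" using assms(1) by (intro mod_less) linarith
  finally show ?thesis using True by linarith
next
  case False
  show ?thesis
  proof (cases "j = i")
    case True then show ?thesis by simp
  next
    case F2: False
    have "i + n - j < n" "i + n - j > 0" using False F2 assms by linarith+
    then have "(i + n - j) mod n = i + n - j" by (intro mod_less)
    then show ?thesis using F2 \<open>i + n - j > 0\<close> by linarith
  qed
qed

lemma idx1:
  fixes i j n :: nat
  assumes "i < n" "j < n"
  shows "(Suc i mod n + n - j) mod n = Suc ((i + n - j) mod n) mod n"
proof -
  have "Suc i mod n + n - j = Suc i mod n + (n - j)" using assms by simp
  moreover have "i + n - j = i + (n - j)" using assms by simp
  ultimately have e: "(Suc i mod n + n - j) mod n = (Suc i + (n - j)) mod n" "i + n - j = i + (n - j)"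
    by (simp_all only: mod_add_left_eq)
  have "(Suc i + (n - j)) mod n = Suc (i + (n - j)) mod n" by simp
  also have "\<dots> = Suc ((i + (n - j)) mod n) mod n" by (rule mod_Suc_eq[symmetric])
  finally show ?thesis using e by simp
qed

lemma sum_mod_lemma:
  fixes a X :: "nat \<Rightarrow> int"
  shows "(\<Sum>j<n. a j * X j) mod M = (\<Sum>j<n. a j * (X j mod M)) mod M"
proof -
  have "(\<Sum>j<n. a j * (X j mod M)) mod M = (\<Sum>j<n. (a j * (X j mod M)) mod M) mod M"
    by (rule mod_sum_eq[symmetric])
  also have "\<dots> = (\<Sum>j<n. (a j * X j) mod M) mod M"
    by (simp only: mod_mult_right_eq)
  also have "\<dots> = (\<Sum>j<n. a j * X j) mod M"
    by (rule mod_sum_eq)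
  finally show ?thesis by simp
qed

definition e0 :: "nat \<Rightarrow> int" where "e0 = (\<lambda>i. if i = 0 then 1 else 0)"

lemma formula:
  assumes "n > 0" "m > 1" "a \<in> ducci_vecs m n" "i < n"
  shows "(ducciT m n ^^ k) a i =
     (\<Sum>j<n. a j * (ducciT m n ^^ k) e0 ((i + n - j) mod n)) mod int m"
  using assms(4)
proof (induction k arbitrary: i)
  case 0
  have "(\<Sum>j<n. a j * (ducciT m n ^^ 0) e0 ((i + n - j) mod n)) = (\<Sum>j<n. if j = i then a j else 0)"
    by (rule sum.cong) (auto simp: e0_def idx0[OF 0])
  also have "\<dots> = a i" using 0 by simp
  finally show ?case using assms(3) 0 by (simp add: ducci_vecs_def)
next
  case (Suc k)
  define g where "g = (ducciT m n ^^ k) e0"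
  have si: "Suc i mod n < n" using assms(1) by simp
  have "(ducciT m n ^^ Suc k) a i = ((ducciT m n ^^ k) a i + (ducciT m n ^^ k) a (Suc i mod n)) mod int m"
    using Suc.prems by (simp add: ducciT_def)
  also have "\<dots> = ((\<Sum>j<n. a j * g ((i + n - j) mod n)) + (\<Sum>j<n. a j * g ((Suc i mod n + n - j) mod n))) mod int m"
    unfolding Suc.IH[OF Suc.prems] Suc.IH[OF si] g_def by (simp add: mod_simps)
  also have "\<dots> = (\<Sum>j<n. a j * (g ((i + n - j) mod n) + g (Suc ((i + n - j) mod n) mod n))) mod int m"
  proof -
    have "\<And>j. j \<in> {..<n} \<Longrightarrow> a j * g ((i + n - j) mod n) + a j * g ((Suc i mod n + n - j) mod n)
        = a j * (g ((i + n - j) mod n) + g (Suc ((i + n - j) mod n) mod n))"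
      using idx1[OF Suc.prems] by (simp add: algebra_simps)
    then have "(\<Sum>j<n. a j * g ((i + n - j) mod n) + a j * g ((Suc i mod n + n - j) mod n))
        = (\<Sum>j<n. a j * (g ((i + n - j) mod n) + g (Suc ((i + n - j) mod n) mod n)))"
      by (rule sum.cong[OF refl])
    then show ?thesis by (simp only: sum.distrib[symmetric])
  qed
  also have "\<dots> = (\<Sum>j<n. a j * ((g ((i + n - j) mod n) + g (Suc ((i + n - j) mod n) mod n)) mod int m)) mod int m"
    by (rule sum_mod_lemma)
  also have "\<dots> = (\<Sum>j<n. a j * (ducciT m n ^^ Suc k) e0 ((i + n - j) mod n)) mod int m"
  proof -
    have h: "\<And>l. l < n \<Longrightarrow> (ducciT m n ^^ Suc k) e0 l = (g l + g (Suc l mod n)) mod int m"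
      by (simp add: ducciT_def g_def)
    have "\<And>j. (ducciT m n ^^ Suc k) e0 ((i + n - j) mod n) = (g ((i + n - j) mod n) + g (Suc ((i + n - j) mod n) mod n)) mod int m"
      using assms(1) by (intro h) simp
    then show ?thesis by (simp only:)
  qed
  finally show ?case .
qed

lemma ones_pow:
  assumes "n > 0" and that: "m > 1"
  shows "(ducciT m n ^^ k) (\<lambda>i. if i < n then 1 else 0) = (\<lambda>i. if i < n then (2::int) ^ k mod int m else 0)"
proof (induction k)
  case 0
  show ?case using that by auto
next
  case (Suc k)
  show ?case
  proof
    fix i
    show "(ducciT m n ^^ Suc k) (\<lambda>i. if i < n then 1 else 0) i = (if i < n then (2::int) ^ Suc k mod int m else 0)"
    proof (cases "i < n")
      case True
      have si: "Suc i mod n < n" using assms by simp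
      have "(ducciT m n ^^ Suc k) (\<lambda>i. if i < n then 1 else 0) i = ((2::int)^k mod int m + 2^k mod int m) mod int m"
        using True si by (simp add: ducciT_def Suc.IH)
      also have "\<dots> = 2 ^ Suc k mod int m" by (simp only: mod_add_eq mult_2 power_Suc)
      finally show ?thesis using True by simp
    next
      case False
      then show ?thesis by (simp add: ducciT_def)
    qed
  qed
qed

theorem proposition4p3:
  fixes m n :: nat
  assumes "odd m" and "m > 2" and "n > 0"
  shows "Ord2 m dvd Pmax m n"
proof -
  define T where "T = ducciT m n"
  have m1: "m > 1" using assms by simp
  have e0v: "e0 \<in> ducci_vecs m n" using m1 assms(3) by (auto simp: ducci_vecs_def e0_def)
  have "range (\<lambda>k. (T ^^ k) e0) \<subseteq> ducci_vecs m n"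
    using vecs_pow[OF e0v] m1 by (auto simp: T_def)
  then have fin: "finite (range (\<lambda>k. (T ^^ k) e0))" using finite_vecs finite_subset by blast
  have "\<not> inj (\<lambda>k. (T ^^ k) e0)"
  proof
    assume "inj (\<lambda>k. (T ^^ k) e0)"
    then have "finite (UNIV :: nat set)" using fin finite_imageD by blast
    then show False by simp
  qed
  then obtain i j where ij: "i \<noteq> j" "(T ^^ i) e0 = (T ^^ j) e0" unfolding inj_def by blast
  have "\<exists>i j. i < j \<and> (T ^^ i) e0 = (T ^^ j) e0"
  proof (cases "i < j")
    case True then show ?thesis using ij by blast
  next
    case False then have "j < i" using ij by simp
    then show ?thesis using ij by metis
  qed
  then obtain i j where ij: "i < j" "(T ^^ i) e0 = (T ^^ j) e0" by blast
  have per: "\<forall>k\<ge>i. (T ^^ (k + (j - i))) e0 = (T ^^ k) e0"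
  proof (intro allI impI)
    fix k assume "k \<ge> i"
    have "(T ^^ (k + (j - i))) e0 = (T ^^ (k - i)) ((T ^^ j) e0)"
    proof -
      have e: "k + (j - i) = (k - i) + j" using \<open>k \<ge> i\<close> ij(1) by simp
      show ?thesis by (simp only: e funpow_add comp_def)
    qed
    also have "\<dots> = (T ^^ (k - i)) ((T ^^ i) e0)" using ij by simp
    also have "\<dots> = (T ^^ k) e0"
    proof -
      have e: "k = (k - i) + i" using \<open>k \<ge> i\<close> by simp
      show ?thesis by (subst (2) e) (simp only: funpow_add comp_def)
    qed
    finally show "(T ^^ (k + (j - i))) e0 = (T ^^ k) e0" .
  qed
  define Q where "Q = cycle_len m n e0"
  have ex: "\<exists>P. 0 < P \<and> (\<exists>N. \<forall>k\<ge>N. (T ^^ (k + P)) e0 = (T ^^ k) e0)"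
    using per ij(1) by (intro exI[of _ "j - i"]) auto
  have Qp: "0 < Q \<and> (\<exists>N. \<forall>k\<ge>N. (T ^^ (k + Q)) e0 = (T ^^ k) e0)"
    unfolding Q_def cycle_len_def T_def[symmetric] by (rule LeastI_ex[OF ex])
  then obtain N where N: "\<forall>k\<ge>N. (T ^^ (k + Q)) e0 = (T ^^ k) e0" by blast
  have all: "(T ^^ (k + Q)) a = (T ^^ k) a" if "a \<in> ducci_vecs m n" "k \<ge> N" for a k
  proof
    fix x
    show "(T ^^ (k + Q)) a x = (T ^^ k) a x"
    proof (cases "x < n")
      case True
      show ?thesis unfolding T_def
        using formula[OF assms(3) m1 that(1) True, of "k + Q"] formula[OF assms(3) m1 that(1) True, of k]
          N that(2) by (simp add: T_def)
    next
      case False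
      then show ?thesis using vecs_pow[OF that(1)] m1 by (auto simp: T_def ducci_vecs_def)
    qed
  qed
  have le: "cycle_len m n a \<le> Q" if "a \<in> ducci_vecs m n" for a
    unfolding cycle_len_def T_def[symmetric]
  proof (rule Least_le)
    show "0 < Q \<and> (\<exists>N. \<forall>k\<ge>N. (T ^^ (k + Q)) a = (T ^^ k) a)"
    proof (intro conjI exI allI impI)
      show "0 < Q" using Qp by blast
      fix k assume "N \<le> k"
      then show "(T ^^ (k + Q)) a = (T ^^ k) a" by (rule all[OF that])
    qed
  qed
  have PQ: "Pmax m n = Q"
    unfolding Pmax_def
  proof (rule Max_eqI)
    show "finite (cycle_len m n ` ducci_vecs m n)" using finite_vecs by (rule finite_imageI)
    show "y \<le> Q" if "y \<in> cycle_len m n ` ducci_vecs m n" for y using that le by blast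
    show "Q \<in> cycle_len m n ` ducci_vecs m n" unfolding Q_def using e0v by (rule imageI)
  qed
  define o1 where "o1 = (\<lambda>i. if i < n then (1::int) else 0)"
  have o1v: "o1 \<in> ducci_vecs m n" using m1 by (auto simp: ducci_vecs_def o1_def)
  have "(T ^^ (N + Q)) o1 0 = (T ^^ N) o1 0" using all[OF o1v, of N] by simp
  then have "(2::int) ^ (N + Q) mod int m = 2 ^ N mod int m"
    using ones_pow[OF assms(3) m1] assms(3) by (simp add: T_def o1_def)
  then have "[2 ^ N * 2 ^ Q = 2 ^ N * 1] (mod int m)"
    by (simp add: cong_def power_add)
  moreover have "coprime ((2::int) ^ N) (int m)"
    using assms(1) by (simp add: coprime_commute)
  ultimately have "[(2::int) ^ Q = 1] (mod int m)"
    using cong_mult_lcancel by blast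
  then have "[int (2 ^ Q) = int 1] (mod int m)" by simp
  then have "[2 ^ Q = 1] (mod m)" by (simp only: cong_int_iff)
  then have "ord m 2 dvd Q" by (rule iffD1[OF ord_divides])
  then show ?thesis by (simp add: Ord2_def PQ)
qed

end
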